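(* Let $H$ be a real Hilbert space, $a\in H$, $r>0$, and let $\{C_\alpha\}_{\alpha\in\Omega}$ ($|\Omega|\ge2$) be a family of closed convex subsets of $H$ each containing the closed ball $B(a,r)$. Let $C=\bigcap_\alpha C_\alpha$. (a) For every starting element $x_0\in H$ and every sequence $\{t_n\}\subset[0,1]$, every sequence $\{x_n\}$ of remote projections onto $\{C_\alpha\}$ with weakness parameters $\{t_n\}$ converges in norm. (b) If moreover $\sum_n t_n^2=\infty$, then the limit $w$ of $\{x_n\}$ belongs to $C$ and for every $n$, $$|x_n-w|\le 2|x_0-a|\prod_{k=0}^{n-1}\Bigl(1-\frac{t_k^2r^2}{|x_0-a|^2}\Bigr)^{1/2}.$$
   Context: $P_\alpha$ is the metric projection onto $C_\alpha$. A sequence of remote projections with weakness parameters $t_n\in[0,1]$ starting at $x_0$: $x_{n+1}=P_{\alpha(n)}x_n$, where $\alpha(n)\in\Omega$ is any index with $\mathrm{dist}(x_n,C_{\alpha(n)})\ge t_n\sup_\alpha\mathrm{dist}(x_n,C_\alpha)$; if $t_n=1$ for some $n$ it is required that $\max_\alpha\mathrm{dist}(x,C_\alpha)$ is attained for every $x\in H$. *)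

theory Defs
  imports "HOL-Analysis.Analysis"
begin

definition metric_proj :: "'a::{real_inner,complete_space} set \<Rightarrow> 'a \<Rightarrow> 'a" where
  "metric_proj S x = (THE p. p \<in> S \<and> (\<forall>y\<in>S. dist x p \<le> dist x y))"

definition remote_proj_seq ::
  "'i set \<Rightarrow> ('i \<Rightarrow> 'a::{real_inner,complete_space} set) \<Rightarrow> (nat \<Rightarrow> real) \<Rightarrow> (nat \<Rightarrow> 'i)
    \<Rightarrow> (nat \<Rightarrow> 'a) \<Rightarrow> bool" where
  "remote_proj_seq Omega C t alpha x \<longleftrightarrow>
     ((\<exists>n. t n = 1) \<longrightarrow>
        (\<forall>y. \<exists>\<beta>\<in>Omega. \<forall>\<gamma>\<in>Omega. infdist y (C \<gamma>) \<le> infdist y (C \<beta>))) \<and>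
     (\<forall>n. alpha n \<in> Omega \<and>
          infdist (x n) (C (alpha n)) \<ge> t n * (SUP \<beta>\<in>Omega. infdist (x n) (C \<beta>)) \<and>
          x (Suc n) = metric_proj (C (alpha n)) (x n))"

end

theory Submission imports Defs begin

lemma infdist_geI:
  assumes "A \<noteq> {}" "\<And>y. y \<in> A \<Longrightarrow> e \<le> dist x y"
  shows "e \<le> infdist x A"
  using assms by (simp add: infdist_notempty cINF_greatest)

lemma parallelogram:
  fixes x p q :: "'a::real_inner"
  shows "(norm (p - q))\<^sup>2 = 2*(norm (x-p))\<^sup>2 + 2*(norm (x-q))\<^sup>2 - 4*(norm (x - (1/2) *\<^sub>R (p+q)))\<^sup>2"
  by (simp add: power2_norm_eq_inner inner_diff_left inner_diff_right inner_add_left inner_add_right inner_commute algebra_simps)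

lemma proj_exists:
  fixes S :: "'a::{real_inner,complete_space} set"
  assumes S: "closed S" "convex S" "S \<noteq> {}"
  shows "\<exists>p\<in>S. \<forall>y\<in>S. dist x p \<le> dist x y"
proof -
  define d where "d = infdist x S"
  have d0: "0 \<le> d" by (simp add: d_def infdist_nonneg)
  have dle: "d \<le> dist x y" if "y \<in> S" for y using that by (simp add: d_def infdist_le)
  have "\<exists>y\<in>S. dist x y < d + 1/(Suc n)" for n
  proof (rule ccontr)
    assume "\<not> ?thesis"
    hence "d + 1/(Suc n) \<le> infdist x S" using S(3) by (intro infdist_geI) force+
    thus False unfolding d_def[symmetric] by (simp add: add_pos_pos)
  qed
  then obtain y where yS: "\<And>n. y n \<in> S" and yd: "\<And>n. dist x (y n) < d + 1/(Suc n)" by metis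
  define e where "e n = (2*d+1)/(Suc n)" for n :: nat
  have sq: "(dist x (y n))\<^sup>2 \<le> d\<^sup>2 + e n" for n
  proof -
    have a: "d \<le> dist x (y n)" using dle yS by blast
    have "(dist x (y n))\<^sup>2 \<le> (d + 1/(Suc n))\<^sup>2" using yd[of n] a d0 by (intro power_mono) auto
    also have "\<dots> = d\<^sup>2 + 2*d*(1/(Suc n)) + (1/(Suc n))\<^sup>2" by (simp add: power2_sum algebra_simps)
    also have "\<dots> \<le> d\<^sup>2 + e n"
    proof -
      have "(1/(real (Suc n)))\<^sup>2 \<le> 1/(Suc n)"
        by (simp add: divide_simps power2_eq_square)
      thus ?thesis by (simp add: e_def add_divide_distrib)
    qed
    finally show ?thesis .
  qed
  have emono: "e n \<le> e m" if "m \<le> n" for m n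
    using that d0 by (simp add: e_def divide_simps mult_left_mono)
  have pair: "(norm (y m - y n))\<^sup>2 \<le> 2 * e m + 2 * e n" for m n
  proof -
    have "(1/2) *\<^sub>R (y m + y n) \<in> S"
    proof -
      have "(1/2) *\<^sub>R y m + (1/2) *\<^sub>R y n \<in> S"
        using S(2) yS[of m] yS[of n] by (intro convexD) auto
      thus ?thesis by (simp add: scaleR_add_right)
    qed
    hence "d \<le> norm (x - (1/2) *\<^sub>R (y m + y n))" using dle by (simp add: dist_norm)
    hence "d\<^sup>2 \<le> (norm (x - (1/2) *\<^sub>R (y m + y n)))\<^sup>2" using d0 by (intro power_mono) auto
    thus ?thesis using parallelogram[of "y m" "y n" x] sq[of m] sq[of n] by (simp add: dist_norm)
  qed
  have "Cauchy y"
  proof (rule metric_CauchyI)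
    fix eps :: real assume "0 < eps"
    obtain N :: nat where N: "4*(2*d+1)/eps\<^sup>2 < N" using reals_Archimedean2 by blast
    have "e N < eps\<^sup>2/4"
      using N \<open>0 < eps\<close> d0 by (simp add: e_def divide_simps mult.commute) (smt (verit) mult_nonneg_nonneg zero_le_power2 distrib_right)
    show "\<exists>M. \<forall>m\<ge>M. \<forall>n\<ge>M. dist (y m) (y n) < eps"
    proof (intro exI allI impI)
      fix m n assume "N \<le> m" "N \<le> n"
      have "(dist (y m) (y n))\<^sup>2 < eps\<^sup>2"
        using pair[of m n] emono[OF \<open>N \<le> m\<close>] emono[OF \<open>N \<le> n\<close>] \<open>e N < eps\<^sup>2/4\<close>
        by (simp add: dist_norm)
      thus "dist (y m) (y n) < eps" using \<open>0 < eps\<close> by (simp add: power_less_imp_less_base)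
    qed
  qed
  then obtain p where p: "y \<longlonglongrightarrow> p" using Cauchy_convergent_iff convergent_def by blast
  have pS: "p \<in> S" using closed_sequentially[OF S(1)] yS p by blast
  have "(\<lambda>n. dist x (y n)) \<longlonglongrightarrow> dist x p" by (intro tendsto_intros p)
  moreover have "(\<lambda>n. d + 1/(Suc n)) \<longlonglongrightarrow> d + 0"
    by (intro tendsto_intros LIMSEQ_inverse_real_of_nat[unfolded inverse_eq_divide])
  ultimately have "dist x p \<le> d + 0" using yd by (intro LIMSEQ_le[where X="\<lambda>n. dist x (y n)"]) (auto intro: less_imp_le)
  thus ?thesis using pS dle by force
qed

lemma norm_diff_sq:
  fixes u v :: "'a::real_inner"
  shows "(norm (u - v))\<^sup>2 = (norm u)\<^sup>2 - 2 * inner u v + (norm v)\<^sup>2"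
  by (simp add: power2_norm_eq_inner inner_diff_left inner_diff_right inner_commute)

lemma metric_proj_props:
  fixes S :: "'a::{real_inner,complete_space} set"
  assumes S: "closed S" "convex S" "S \<noteq> {}"
  shows "metric_proj S x \<in> S \<and> (\<forall>y\<in>S. dist x (metric_proj S x) \<le> dist x y)"
proof -
  obtain p where p: "p \<in> S" "\<forall>y\<in>S. dist x p \<le> dist x y" using proj_exists[OF S] by blast
  have uniq: "q = p" if q: "q \<in> S" "\<forall>y\<in>S. dist x q \<le> dist x y" for q
  proof -
    have eq: "dist x q = dist x p" using p(2) q(1) q(2) p(1) by (meson antisym)
    have "(1/2) *\<^sub>R q + (1/2) *\<^sub>R p \<in> S"
      using S(2) p q by (intro convexD) auto
    hence mS: "(1/2) *\<^sub>R (q + p) \<in> S" by (simp add: scaleR_add_right)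
    hence "norm (x - p) \<le> norm (x - (1/2) *\<^sub>R (q + p))" using p by (simp add: dist_norm)
    hence "(norm (x - p))\<^sup>2 \<le> (norm (x - (1/2) *\<^sub>R (q + p)))\<^sup>2" by (intro power_mono) auto
    hence "(norm (q - p))\<^sup>2 \<le> 0" using parallelogram[of q p x] eq by (simp add: dist_norm)
    thus ?thesis by simp
  qed
  have "metric_proj S x = p" unfolding metric_proj_def
  proof (rule the_equality)
    show "p \<in> S \<and> (\<forall>y\<in>S. dist x p \<le> dist x y)" using p by blast
    show "\<And>q. q \<in> S \<and> (\<forall>y\<in>S. dist x q \<le> dist x y) \<Longrightarrow> q = p" using uniq by blast
  qed
  thus ?thesis using p by simp
qed

lemma metric_proj_ineq:
  fixes S :: "'a::{real_inner,complete_space} set"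
  assumes S: "closed S" "convex S" "S \<noteq> {}" and z: "z \<in> S"
  shows "inner (x - metric_proj S x) (z - metric_proj S x) \<le> 0"
proof (rule ccontr)
  define p where "p = metric_proj S x"
  have pS: "p \<in> S" and pmin: "\<forall>y\<in>S. dist x p \<le> dist x y" using metric_proj_props[OF S, of x] by (auto simp: p_def)
  assume "\<not> ?thesis"
  hence c: "inner (x - p) (z - p) > 0" by (simp add: p_def)
  define c where "c = inner (x - p) (z - p)"
  define t where "t = min 1 (c / ((norm (z - p))\<^sup>2 + 1))"
  have t0: "0 < t" "t \<le> 1" using c by (auto simp: t_def c_def intro!: divide_pos_pos add_pos_nonneg)
  have tc: "t * (norm (z - p))\<^sup>2 < c"
  proof -
    have pos: "(norm (z - p))\<^sup>2 + 1 > 0" by (simp add: add_nonneg_pos)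
    have "t * (norm (z - p))\<^sup>2 \<le> c / ((norm (z - p))\<^sup>2 + 1) * (norm (z - p))\<^sup>2"
      by (intro mult_right_mono) (auto simp: t_def)
    also have "\<dots> < c" using c pos by (simp add: c_def divide_simps add_pos_nonneg)
    finally show ?thesis .
  qed
  have "(1 - t) *\<^sub>R p + t *\<^sub>R z \<in> S" using S(2) pS z t0 by (intro convexD) auto
  hence "dist x p \<le> dist x ((1 - t) *\<^sub>R p + t *\<^sub>R z)" using pmin by blast
  moreover have "x - ((1 - t) *\<^sub>R p + t *\<^sub>R z) = (x - p) - t *\<^sub>R (z - p)" by (simp add: algebra_simps)
  ultimately have "norm (x - p) \<le> norm ((x - p) - t *\<^sub>R (z - p))" by (simp add: dist_norm)
  hence "(norm (x - p))\<^sup>2 \<le> (norm ((x - p) - t *\<^sub>R (z - p)))\<^sup>2" by (intro power_mono) auto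
  also have "\<dots> = (norm (x - p))\<^sup>2 - 2 * t * c + t\<^sup>2 * (norm (z - p))\<^sup>2"
    unfolding norm_diff_sq[of "x - p"] by (simp add: c_def power_mult_distrib)
  finally have "2 * t * c \<le> t * (t * (norm (z - p))\<^sup>2)" by (simp add: power2_eq_square algebra_simps)
  hence "2 * c \<le> t * (norm (z - p))\<^sup>2" using t0 by simp
  thus False using tc c c_def by linarith
qed

lemma metric_proj_infdist:
  fixes S :: "'a::{real_inner,complete_space} set"
  assumes S: "closed S" "convex S" "S \<noteq> {}"
  shows "infdist x S = dist x (metric_proj S x)"
proof (rule antisym)
  have *: "metric_proj S x \<in> S" "\<forall>y\<in>S. dist x (metric_proj S x) \<le> dist x y"
    using metric_proj_props[OF S, of x] by auto
  show "infdist x S \<le> dist x (metric_proj S x)" using *(1) by (rule infdist_le)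
  show "dist x (metric_proj S x) \<le> infdist x S" using *(2) S(3) by (intro infdist_geI) auto
qed

lemma proj_step:
  fixes S :: "'a::{real_inner,complete_space} set" and x :: 'a
  assumes S: "closed S" "convex S" and ball: "cball a r \<subseteq> S" and r: "r > 0"
  defines "p \<equiv> metric_proj S x"
  shows "\<And>z. z \<in> S \<Longrightarrow> (norm (x - p))\<^sup>2 + (norm (p - z))\<^sup>2 \<le> (norm (x - z))\<^sup>2"
    and "(norm (p - a))\<^sup>2 + (norm (x - p))\<^sup>2 + 2 * r * norm (x - p) \<le> (norm (x - a))\<^sup>2"
proof -
  have Sne: "S \<noteq> {}" using ball r by auto
  note ineq = metric_proj_ineq[OF S Sne, where x=x, folded p_def]
  have expand: "(norm (x - z))\<^sup>2 = (norm (x - p))\<^sup>2 + (norm (p - z))\<^sup>2 - 2 * inner (x - p) (z - p)" for z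
    using norm_diff_sq[of "x - p" "z - p"] by (simp add: inner_commute norm_minus_commute)
  show "(norm (x - p))\<^sup>2 + (norm (p - z))\<^sup>2 \<le> (norm (x - z))\<^sup>2" if "z \<in> S" for z
    using ineq[OF that] expand[of z] by linarith
  have key: "r * norm (x - p) \<le> inner (x - p) (p - a)"
  proof (cases "x = p")
    case True thus ?thesis by simp
  next
    case False
    define z where "z = a + (r / norm (x - p)) *\<^sub>R (x - p)"
    have "z \<in> cball a r" using False r by (simp add: z_def dist_norm)
    hence "z \<in> S" using ball by blast
    from ineq[OF this] have "inner (x - p) (z - p) \<le> 0" .
    moreover have "z - p = (a - p) + (r / norm (x - p)) *\<^sub>R (x - p)" by (simp add: z_def)
    moreover have "inner (x - p) ((r / norm (x - p)) *\<^sub>R (x - p)) = r * norm (x - p)"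
      using False by (simp add: power2_norm_eq_inner[symmetric] power2_eq_square)
    ultimately show ?thesis by (simp add: inner_add_right inner_diff_right inner_diff_left algebra_simps)
  qed
  show "(norm (p - a))\<^sup>2 + (norm (x - p))\<^sup>2 + 2 * r * norm (x - p) \<le> (norm (x - a))\<^sup>2"
    using key expand[of a] by (simp add: inner_diff_right inner_diff_left inner_commute norm_minus_commute)
qed


lemma dist_le_partial:
  fixes x :: "nat \<Rightarrow> 'a::metric_space"
  assumes "\<And>n. dist (x n) (x (Suc n)) \<le> d n" "m \<le> n"
  shows "dist (x m) (x n) \<le> (\<Sum>k<n. d k) - (\<Sum>k<m. d k)"
  using assms(2)
proof (induction n)
  case 0 thus ?case by simp
next
  case (Suc n)
  show ?case
  proof (cases "m = Suc n")
    case True thus ?thesis by simp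
  next
    case False
    hence "m \<le> n" using Suc.prems by simp
    hence "dist (x m) (x n) \<le> (\<Sum>k<n. d k) - (\<Sum>k<m. d k)" by (rule Suc.IH)
    moreover have "dist (x m) (x (Suc n)) \<le> dist (x m) (x n) + dist (x n) (x (Suc n))" by (rule dist_triangle)
    ultimately show ?thesis using assms(1)[of n] by simp
  qed
qed

lemma cauchy_from_summable:
  fixes x :: "nat \<Rightarrow> 'a::metric_space"
  assumes "\<And>n. dist (x n) (x (Suc n)) \<le> d n" "summable d"
  shows "Cauchy x"
proof (rule metric_CauchyI)
  fix e :: real assume e: "0 < e"
  have "Cauchy (\<lambda>n. \<Sum>k<n. d k)" using summable_LIMSEQ[OF assms(2)] by (rule LIMSEQ_imp_Cauchy)
  then obtain M where M: "\<forall>m\<ge>M. \<forall>n\<ge>M. dist (\<Sum>k<m. d k) (\<Sum>k<n. d k) < e"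
    using e by (meson metric_CauchyD)
  have "dist (x m) (x n) < e" if "m \<ge> M" "n \<ge> M" for m n
  proof (cases "m \<le> n")
    case True
    have "dist (x m) (x n) \<le> (\<Sum>k<n. d k) - (\<Sum>k<m. d k)" by (rule dist_le_partial[of x d, OF assms(1) True])
    also have "\<dots> < e" using M[rule_format, OF that] by (simp add: dist_real_def abs_less_iff)
    finally show ?thesis .
  next
    case False
    hence "n \<le> m" by simp
    have "dist (x n) (x m) \<le> (\<Sum>k<m. d k) - (\<Sum>k<n. d k)" by (rule dist_le_partial[of x d, OF assms(1) \<open>n \<le> m\<close>])
    also have "\<dots> < e" using M[rule_format, OF that] by (simp add: dist_real_def abs_less_iff)
    finally show ?thesis by (simp add: dist_commute)
  qed
  thus "\<exists>M. \<forall>m\<ge>M. \<forall>n\<ge>M. dist (x m) (x n) < e" by blast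
qed

theorem mainTheorem6:
  fixes Omega :: "'i set" and C :: "'i \<Rightarrow> 'a::{real_inner,complete_space} set"
    and a :: 'a and r :: real and t :: "nat \<Rightarrow> real" and alpha :: "nat \<Rightarrow> 'i"
    and x :: "nat \<Rightarrow> 'a"
  assumes "r > 0"
    and "\<exists>\<alpha>\<in>Omega. \<exists>\<beta>\<in>Omega. \<alpha> \<noteq> \<beta>"
    and "\<And>\<alpha>. \<alpha> \<in> Omega \<Longrightarrow> closed (C \<alpha>) \<and> convex (C \<alpha>) \<and> cball a r \<subseteq> C \<alpha>"
    and "\<And>n. 0 \<le> t n \<and> t n \<le> 1"
    and "remote_proj_seq Omega C t alpha x"
  shows "convergent x \<and>
    (\<not> summable (\<lambda>n. (t n)\<^sup>2) \<longrightarrow>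
       lim x \<in> (\<Inter>\<alpha>\<in>Omega. C \<alpha>) \<and>
       (\<forall>n. (\<forall>k<n. (t k)\<^sup>2 * r\<^sup>2 \<le> (norm (x 0 - a))\<^sup>2) \<longrightarrow>
          norm (x n - lim x) \<le> 2 * norm (x 0 - a) *
             (\<Prod>k<n. sqrt (1 - (t k)\<^sup>2 * r\<^sup>2 / (norm (x 0 - a))\<^sup>2))))"
proof -
  note r = assms(1)
  have Omne: "Omega \<noteq> {}" using assms(2) by blast
  have Ccl: "closed (C \<beta>)" and Ccv: "convex (C \<beta>)" and Cball: "cball a r \<subseteq> C \<beta>"
    and aC: "a \<in> C \<beta>" and Cne: "C \<beta> \<noteq> {}" if "\<beta> \<in> Omega" for \<beta>
    using assms(3)[OF that] r by (auto intro: less_imp_le)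
  define D where "D n = (SUP \<beta>\<in>Omega. infdist (x n) (C \<beta>))" for n
  have al: "alpha n \<in> Omega" and tD: "t n * D n \<le> infdist (x n) (C (alpha n))"
    and xs: "x (Suc n) = metric_proj (C (alpha n)) (x n)" for n
    using assms(5) unfolding remote_proj_seq_def D_def by auto
  define d where "d n = norm (x n - x (Suc n))" for n
  define R where "R = norm (x 0 - a)"
  have d0: "0 \<le> d n" for n by (simp add: d_def)
  have d_inf: "infdist (x n) (C (alpha n)) = d n" for n
    using metric_proj_infdist[OF Ccl[OF al[of n]] Ccv[OF al[of n]] Cne[OF al[of n]], of "x n"]
    by (simp add: xs d_def dist_norm)
  have step1: "(norm (x (Suc n) - a))\<^sup>2 + (d n)\<^sup>2 + 2 * r * d n \<le> (norm (x n - a))\<^sup>2" for n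
    using proj_step(2)[OF Ccl[OF al[of n]] Ccv[OF al[of n]] Cball[OF al[of n]] r, where x="x n"]
    by (simp add: xs[symmetric] d_def)
  have tele: "(norm (x n - a))\<^sup>2 + (\<Sum>k<n. 2 * r * d k + (d k)\<^sup>2) \<le> R\<^sup>2" for n
  proof (induction n)
    case 0 thus ?case by (simp add: R_def)
  next
    case (Suc n) thus ?case using step1[of n] by simp
  qed
  have xa_le: "norm (x n - a) \<le> R" for n
  proof -
    have "(\<Sum>k<n. 2 * r * d k + (d k)\<^sup>2) \<ge> 0" using r d0 by (intro sum_nonneg) auto
    hence "(norm (x n - a))\<^sup>2 \<le> R\<^sup>2" using tele[of n] by linarith
    thus ?thesis using R_def by (simp add: power2_le_iff_abs_le)
  qed
  have sumd: "summable d"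
  proof (rule summableI_nonneg_bounded[where x="R\<^sup>2 / (2 * r)"])
    show "0 \<le> d n" for n by (rule d0)
    fix n
    have "2 * r * (\<Sum>k<n. d k) = (\<Sum>k<n. 2 * r * d k)" by (simp add: sum_distrib_left)
    also have "\<dots> \<le> (\<Sum>k<n. 2 * r * d k + (d k)\<^sup>2)" by (intro sum_mono) auto
    also have "\<dots> \<le> R\<^sup>2" using tele[of n] zero_le_power2[of "norm (x n - a)"] by linarith
    finally show "(\<Sum>k<n. d k) \<le> R\<^sup>2 / (2 * r)" using r by (simp add: field_simps)
  qed
  have sumd2: "summable (\<lambda>n. (d n)\<^sup>2)"
  proof (rule summableI_nonneg_bounded[where x="R\<^sup>2"])
    show "0 \<le> (d n)\<^sup>2" for n by simp
    fix n
    have "(\<Sum>k<n. (d k)\<^sup>2) \<le> (\<Sum>k<n. 2 * r * d k + (d k)\<^sup>2)" using r d0 by (intro sum_mono) auto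
    also have "\<dots> \<le> R\<^sup>2" using tele[of n] zero_le_power2[of "norm (x n - a)"] by linarith
    finally show "(\<Sum>k<n. (d k)\<^sup>2) \<le> R\<^sup>2" .
  qed
  have conv: "convergent x"
    using cauchy_from_summable[of x d, OF _ sumd] Cauchy_convergent_iff by (auto simp: d_def dist_norm)
  define w where "w = lim x"
  have xw: "x \<longlonglongrightarrow> w" using conv by (simp add: w_def convergent_LIMSEQ_iff)
  define Cs where "Cs = (\<Inter>\<alpha>\<in>Omega. C \<alpha>)"
  have aCs: "a \<in> Cs" using aC by (simp add: Cs_def)
  have Csne: "Cs \<noteq> {}" using aCs by blast
  have Cscl: "closed Cs" using Ccl by (simp add: Cs_def closed_INT)
  have fejer: "(d n)\<^sup>2 + (norm (x (Suc n) - z))\<^sup>2 \<le> (norm (x n - z))\<^sup>2" if "z \<in> Cs" for n z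
  proof -
    have "z \<in> C (alpha n)" using that al by (auto simp: Cs_def)
    from proj_step(1)[OF Ccl[OF al[of n]] Ccv[OF al[of n]] Cball[OF al[of n]] r, where x="x n", OF this]
    show ?thesis by (simp add: xs[symmetric] d_def)
  qed
  have fejer2: "norm (x m - z) \<le> norm (x n - z)" if "z \<in> Cs" "n \<le> m" for n m z
  proof -
    have "decseq (\<lambda>n. norm (x n - z))"
    proof (rule decseq_SucI)
      fix n
      have "(norm (x (Suc n) - z))\<^sup>2 \<le> (norm (x n - z))\<^sup>2" using fejer[OF that(1), of n] zero_le_power2[of "d n"] by linarith
      thus "norm (x (Suc n) - z) \<le> norm (x n - z)" by (simp add: power2_le_iff_abs_le)
    qed
    from decseqD[OF this that(2)] show ?thesis by simp
  qed
  have fejer_w: "norm (w - z) \<le> norm (x n - z)" if "z \<in> Cs" for n z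
  proof (rule LIMSEQ_le_const2)
    show "(\<lambda>m. norm (x m - z)) \<longlonglongrightarrow> norm (w - z)" by (intro tendsto_intros xw)
    show "\<exists>N. \<forall>m\<ge>N. norm (x m - z) \<le> norm (x n - z)" using fejer2[OF that] by blast
  qed
  define \<delta> where "\<delta> n = infdist (x n) Cs" for n
  have \<delta>0: "0 \<le> \<delta> n" for n by (simp add: \<delta>_def infdist_nonneg)
  have F2: "(\<delta> (Suc n))\<^sup>2 + (d n)\<^sup>2 \<le> (\<delta> n)\<^sup>2" for n
  proof -
    have "sqrt ((\<delta> (Suc n))\<^sup>2 + (d n)\<^sup>2) \<le> \<delta> n" unfolding \<delta>_def
    proof (rule infdist_geI[OF Csne])
      fix z assume z: "z \<in> Cs"
      have "infdist (x (Suc n)) Cs \<le> norm (x (Suc n) - z)" using infdist_le[OF z] by (simp add: dist_norm)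
      hence "(infdist (x (Suc n)) Cs)\<^sup>2 \<le> (norm (x (Suc n) - z))\<^sup>2" using infdist_nonneg by (intro power_mono) auto
      hence "(infdist (x (Suc n)) Cs)\<^sup>2 + (d n)\<^sup>2 \<le> (norm (x n - z))\<^sup>2" using fejer[OF z, of n] by linarith
      hence "sqrt ((infdist (x (Suc n)) Cs)\<^sup>2 + (d n)\<^sup>2) \<le> sqrt ((norm (x n - z))\<^sup>2)" by (rule real_sqrt_le_mono)
      thus "sqrt ((infdist (x (Suc n)) Cs)\<^sup>2 + (d n)\<^sup>2) \<le> dist (x n) z" by (simp add: dist_norm)
    qed
    hence "(sqrt ((\<delta> (Suc n))\<^sup>2 + (d n)\<^sup>2))\<^sup>2 \<le> (\<delta> n)\<^sup>2" by (intro power_mono) auto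
    thus ?thesis by simp
  qed
  have \<delta>dec: "decseq \<delta>"
  proof (rule decseq_SucI)
    fix n
    have "(\<delta> (Suc n))\<^sup>2 \<le> (\<delta> n)\<^sup>2" using F2[of n] zero_le_power2[of "d n"] by linarith
    thus "\<delta> (Suc n) \<le> \<delta> n" using \<delta>0 by (simp add: power2_le_iff_abs_le)
  qed
  have bdd: "bdd_above ((\<lambda>\<beta>. infdist (x n) (C \<beta>)) ` Omega)" for n
    by (rule bdd_aboveI2[where M="dist (x n) a"]) (auto intro: infdist_le aC)
  have Dup: "infdist (x n) (C \<beta>) \<le> D n" if "\<beta> \<in> Omega" for n \<beta>
    unfolding D_def by (rule cSUP_upper[OF that bdd])
  have D0: "0 \<le> D n" for n
  proof -
    obtain \<beta> where "\<beta> \<in> Omega" using Omne by blast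
    thus ?thesis using Dup[of \<beta> n] infdist_nonneg[of "x n" "C \<beta>"] by linarith
  qed
  have F3: "r * \<delta> n \<le> D n * norm (x n - a)" for n
  proof (cases "D n = 0")
    case True
    have "x n \<in> C \<beta>" if "\<beta> \<in> Omega" for \<beta>
      using Dup[OF that, of n] True infdist_nonneg[of "x n" "C \<beta>"]
        in_closed_iff_infdist_zero[OF Ccl[OF that] Cne[OF that]] by simp
    hence "x n \<in> Cs" by (simp add: Cs_def)
    thus ?thesis using True by (simp add: \<delta>_def)
  next
    case False
    hence Dp: "D n > 0" using D0[of n] by simp
    define y where "y = x n"
    define c where "c = (r / (r + D n)) *\<^sub>R y + (D n / (r + D n)) *\<^sub>R a"
    have "c \<in> C \<beta>" if \<beta>: "\<beta> \<in> Omega" for \<beta>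
    proof -
      define q where "q = metric_proj (C \<beta>) y"
      have qC: "q \<in> C \<beta>" using metric_proj_props[OF Ccl[OF \<beta>] Ccv[OF \<beta>] Cne[OF \<beta>]] by (simp add: q_def)
      have yq: "norm (y - q) \<le> D n"
        using metric_proj_infdist[OF Ccl[OF \<beta>] Ccv[OF \<beta>] Cne[OF \<beta>], of y] Dup[OF \<beta>, of n]
        by (simp add: q_def y_def dist_norm)
      define b where "b = a + (r / D n) *\<^sub>R (y - q)"
      have "dist a b = (r / D n) * norm (y - q)" using r Dp by (simp add: b_def dist_norm)
      also have "\<dots> \<le> (r / D n) * D n" using yq r Dp by (intro mult_left_mono) auto
      also have "\<dots> = r" using Dp by simp
      finally have "b \<in> C \<beta>" using Cball[OF \<beta>] by auto
      have "(r / (r + D n)) *\<^sub>R q + (D n / (r + D n)) *\<^sub>R b \<in> C \<beta>"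
      proof (rule convexD[OF Ccv[OF \<beta>] qC])
        have rD: "r + D n > 0" using r Dp by simp
        show "b \<in> C \<beta>" by fact
        show "0 \<le> r / (r + D n)" "0 \<le> D n / (r + D n)" using r Dp rD by auto
        show "r / (r + D n) + D n / (r + D n) = 1" using rD by (simp add: add_divide_distrib[symmetric])
      qed
      moreover have "(r / (r + D n)) *\<^sub>R q + (D n / (r + D n)) *\<^sub>R b = c"
      proof -
        have e: "(D n / (r + D n)) * (r / D n) = r / (r + D n)" using Dp r by (simp add: field_simps)
        have "(D n / (r + D n)) *\<^sub>R b = (D n / (r + D n)) *\<^sub>R a + (r / (r + D n)) *\<^sub>R (y - q)"
          by (simp add: b_def scaleR_add_right e[symmetric])
        thus ?thesis by (simp add: c_def algebra_simps)
      qed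
      ultimately show ?thesis by simp
    qed
    hence cCs: "c \<in> Cs" by (simp add: Cs_def)
    have "y - c = (D n / (r + D n)) *\<^sub>R (y - a)"
    proof -
      have e1: "1 - r / (r + D n) = D n / (r + D n)" using r Dp by (simp add: field_simps)
      have "y - c = (1 - r / (r + D n)) *\<^sub>R y - (D n / (r + D n)) *\<^sub>R a"
        by (simp add: c_def algebra_simps)
      thus ?thesis by (simp add: e1 scaleR_diff_right)
    qed
    hence "\<delta> n \<le> (D n / (r + D n)) * norm (y - a)"
      using infdist_le[OF cCs, of y] Dp r by (simp add: \<delta>_def y_def dist_norm)
    also have "\<dots> \<le> (D n / r) * norm (y - a)"
      using Dp r by (intro mult_right_mono frac_le) auto
    finally show ?thesis using r by (simp add: y_def field_simps)
  qed
  have F4: "t n * D n \<le> d n" for n using tD[of n] d_inf[of n] by simp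
  have key: "(t n * r * \<delta> n)\<^sup>2 \<le> (R * d n)\<^sup>2" for n
  proof -
    have t0: "0 \<le> t n" using assms(4) by simp
    have "r * \<delta> n \<le> D n * R"
      using F3[of n] mult_left_mono[OF xa_le[of n] D0[of n]] by linarith
    hence "t n * (r * \<delta> n) \<le> t n * (D n * R)" using t0 by (rule mult_left_mono)
    hence "t n * r * \<delta> n \<le> (t n * D n) * R" by (simp add: mult.assoc)
    also have "\<dots> \<le> d n * R" using F4[of n] by (rule mult_right_mono) (simp add: R_def)
    also have "\<dots> = R * d n" by simp
    finally show ?thesis using t0 r \<delta>0[of n] by (intro power_mono) auto
  qed
  define s where "s k = (t k)\<^sup>2 * r\<^sup>2 / R\<^sup>2" for k
  have rec: "\<delta> (Suc n) \<le> \<delta> n * sqrt (1 - s n)" for n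
  proof -
    have "(\<delta> n)\<^sup>2 * s n \<le> (d n)\<^sup>2"
    proof (cases "R = 0")
      case True thus ?thesis by (simp add: s_def)
    next
      case False
      have "(\<delta> n)\<^sup>2 * s n = (t n * r * \<delta> n)\<^sup>2 / R\<^sup>2" by (simp add: s_def power_mult_distrib)
      also have "\<dots> \<le> (R * d n)\<^sup>2 / R\<^sup>2" using key[of n] by (intro divide_right_mono) auto
      also have "\<dots> = (d n)\<^sup>2" using False by (simp add: power_mult_distrib)
      finally show ?thesis .
    qed
    hence "(\<delta> (Suc n))\<^sup>2 \<le> (\<delta> n)\<^sup>2 * (1 - s n)" using F2[of n] by (simp add: algebra_simps)
    hence "sqrt ((\<delta> (Suc n))\<^sup>2) \<le> sqrt ((\<delta> n)\<^sup>2 * (1 - s n))" by (rule real_sqrt_le_mono)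
    thus ?thesis using \<delta>0 by (simp add: real_sqrt_mult)
  qed
  have bound: "\<delta> n \<le> R * (\<Prod>k<n. sqrt (1 - s k))" if "\<forall>k<n. (t k)\<^sup>2 * r\<^sup>2 \<le> R\<^sup>2" for n
    using that
  proof (induction n)
    case 0 thus ?case using infdist_le[OF aCs, of "x 0"] by (simp add: \<delta>_def R_def dist_norm)
  next
    case (Suc n)
    have IH: "\<delta> n \<le> R * (\<Prod>k<n. sqrt (1 - s k))" using Suc by auto
    have "s n \<le> 1"
    proof (cases "R = 0")
      case True thus ?thesis by (simp add: s_def)
    next
      case False thus ?thesis using Suc.prems by (simp add: s_def divide_simps)
    qed
    hence sq0: "0 \<le> sqrt (1 - s n)" by simp
    have "\<delta> (Suc n) \<le> \<delta> n * sqrt (1 - s n)" by (rule rec)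
    also have "\<dots> \<le> R * (\<Prod>k<n. sqrt (1 - s k)) * sqrt (1 - s n)" by (rule mult_right_mono[OF IH sq0])
    finally show ?case by (simp add: mult_ac)
  qed
  have dist_w: "norm (x n - w) \<le> 2 * \<delta> n" for n
  proof -
    have "norm (x n - w) / 2 \<le> \<delta> n" unfolding \<delta>_def
    proof (rule infdist_geI[OF Csne])
      fix z assume z: "z \<in> Cs"
      have "x n - w = (x n - z) - (w - z)" by simp
      hence "norm (x n - w) \<le> norm (x n - z) + norm (w - z)" using norm_triangle_ineq4[of "x n - z" "w - z"] by simp
      thus "norm (x n - w) / 2 \<le> dist (x n) z" using fejer_w[OF z, of n] by (simp add: dist_norm)
    qed
    thus ?thesis by simp
  qed
  show ?thesis
  proof (intro conjI impI allI)
    show "convergent x" by (rule conv)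
    assume nsum: "\<not> summable (\<lambda>n. (t n)\<^sup>2)"
    have small: "\<exists>n. \<delta> n < e" if e: "e > 0" for e
    proof (rule ccontr)
      assume "\<not> ?thesis"
      hence ge: "\<delta> n \<ge> e" for n by (simp add: not_less)
      have "summable (\<lambda>n. (R / (r * e))\<^sup>2 * (d n)\<^sup>2)" by (intro summable_mult sumd2)
      moreover have "norm ((t n)\<^sup>2) \<le> (R / (r * e))\<^sup>2 * (d n)\<^sup>2" for n
      proof -
        have "(t n * r * e)\<^sup>2 \<le> (t n * r * \<delta> n)\<^sup>2"
          using ge[of n] e r assms(4)[of n] by (intro power_mono mult_left_mono) auto
        also have "\<dots> \<le> (R * d n)\<^sup>2" by (rule key)
        finally have "(t n)\<^sup>2 * (r * e)\<^sup>2 \<le> R\<^sup>2 * (d n)\<^sup>2" by (simp add: power_mult_distrib mult_ac)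
        moreover have "0 < (r * e)\<^sup>2" using e r by simp
        ultimately have "(t n)\<^sup>2 \<le> R\<^sup>2 * (d n)\<^sup>2 / (r * e)\<^sup>2" by (simp add: pos_le_divide_eq)
        thus ?thesis by (simp add: power_divide)
      qed
      ultimately have "summable (\<lambda>n. (t n)\<^sup>2)" by (rule summable_comparison_test'[where N=0])
      thus False using nsum by simp
    qed
    have le_e: "infdist w Cs \<le> e" if e: "e > 0" for e
    proof -
      obtain n where n: "\<delta> n < e / 2" using small[of "e/2"] e by auto
      have "\<exists>N. \<forall>m\<ge>N. dist (x m) w < e / 2" using e by (intro metric_LIMSEQ_D[OF xw]) simp
      then obtain N where N: "\<And>m. m \<ge> N \<Longrightarrow> dist (x m) w < e / 2" by blast
      define m where "m = max n N"
      have "n \<le> m" by (simp add: m_def)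
      with \<delta>dec have dm: "\<delta> m \<le> \<delta> n" by (rule decseqD)
      have "N \<le> m" by (simp add: m_def)
      hence xm: "dist w (x m) < e / 2" using N by (simp add: dist_commute)
      have "infdist w Cs \<le> infdist (x m) Cs + dist w (x m)" by (rule infdist_triangle)
      thus ?thesis using dm xm n unfolding \<delta>_def by linarith
    qed
    have "infdist w Cs \<le> 0"
    proof (rule dense_ge)
      fix y :: real assume "0 < y" thus "infdist w Cs \<le> y" by (rule le_e)
    qed
    hence "infdist w Cs = 0" using infdist_nonneg[of w Cs] by linarith
    hence "w \<in> Cs" using in_closed_iff_infdist_zero[OF Cscl Csne] by blast
    thus "lim x \<in> (\<Inter>\<alpha>\<in>Omega. C \<alpha>)" unfolding w_def Cs_def .
  next
    fix n assume h: "\<forall>k<n. (t k)\<^sup>2 * r\<^sup>2 \<le> (norm (x 0 - a))\<^sup>2"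
    have "norm (x n - lim x) \<le> 2 * \<delta> n" using dist_w by (simp add: w_def)
    also have "\<dots> \<le> 2 * (R * (\<Prod>k<n. sqrt (1 - s k)))" using bound[of n] h by (simp add: R_def)
    finally show "norm (x n - lim x) \<le> 2 * norm (x 0 - a) *
             (\<Prod>k<n. sqrt (1 - (t k)\<^sup>2 * r\<^sup>2 / (norm (x 0 - a))\<^sup>2))"
      by (simp add: s_def R_def mult.assoc)
  qed
qed

end
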